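(* Let $G$ act on $M$ and consider the induced action on $p$-dimensional submanifolds, with a moving frame producing invariant differential operators $\mathcal{D}_1,\dots,\mathcal{D}_p$ satisfying $[\mathcal{D}_j,\mathcal{D}_k]=\sum_{i=1}^p Y^i_{jk}\mathcal{D}_i$. Let $I=(I_1,\dots,I_p)$ be differential invariants such that the $p\times p$ matrix $\mathcal{D}(I)=(\mathcal{D}_iI_l)$ is nonsingular. Then every commutator invariant $Y^i_{jk}$ can be expressed as a rational function of the invariant derivatives of order $\le2$ of $I_1,\dots,I_p$.
   Context: The commutator invariants $Y^i_{jk}=-Y^i_{kj}$ are the differential invariants appearing as coefficients in the commutation formulae of the invariant differential operators $\mathcal{D}_1,\dots,\mathcal{D}_p$ (the total derivations dual to the contact-invariant coframe obtained from the moving frame). *)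

theory Defs
  imports "HOL-Analysis.Analysis"
begin

fun iter_D :: "('p \<Rightarrow> ('x \<Rightarrow> real) \<Rightarrow> ('x \<Rightarrow> real)) \<Rightarrow> 'p list \<Rightarrow> ('x \<Rightarrow> real) \<Rightarrow> ('x \<Rightarrow> real)" where
  "iter_D D [] f = f"
| "iter_D D (j # js) f = D j (iter_D D js f)"

inductive polyfun :: "'v set \<Rightarrow> (('v \<Rightarrow> real) \<Rightarrow> real) \<Rightarrow> bool" for V where
  const: "polyfun V (\<lambda>u. c)"
| var: "v \<in> V \<Longrightarrow> polyfun V (\<lambda>u. u v)"
| add: "polyfun V P \<Longrightarrow> polyfun V Q \<Longrightarrow> polyfun V (\<lambda>u. P u + Q u)"
| mult: "polyfun V P \<Longrightarrow> polyfun V Q \<Longrightarrow> polyfun V (\<lambda>u. P u * Q u)"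

text \<open>Invariance of a function on the (jet) space X under the (prolonged) group action.\<close>
definition invariant_fun :: "('g \<Rightarrow> 'x \<Rightarrow> 'x) \<Rightarrow> 'x set \<Rightarrow> ('x \<Rightarrow> real) \<Rightarrow> bool" where
  "invariant_fun act X f \<longleftrightarrow> (\<forall>g z. z \<in> X \<longrightarrow> act g z \<in> X \<longrightarrow> f (act g z) = f z)"

text \<open>Variables for the invariant derivatives D_J I_l of order |J| \<le> 2, and their values at z.\<close>
definition deriv_vars_le2 :: "('p list \<times> 'p) set" where
  "deriv_vars_le2 = {(J, l). length J \<le> 2}"

definition deriv_values ::
  "('p \<Rightarrow> ('x \<Rightarrow> real) \<Rightarrow> ('x \<Rightarrow> real)) \<Rightarrow> ('p \<Rightarrow> 'x \<Rightarrow> real) \<Rightarrow> 'x \<Rightarrow> ('p list \<times> 'p) \<Rightarrow> real" where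
  "deriv_values D I z = (\<lambda>(J, l). iter_D D J (I l) z)"

definition rational_in_derivs_le2 ::
  "'x set \<Rightarrow> ('p \<Rightarrow> ('x \<Rightarrow> real) \<Rightarrow> ('x \<Rightarrow> real)) \<Rightarrow> ('p \<Rightarrow> 'x \<Rightarrow> real) \<Rightarrow> ('x \<Rightarrow> real) \<Rightarrow> bool" where
  "rational_in_derivs_le2 X D I f \<longleftrightarrow>
     (\<exists>P Q. polyfun deriv_vars_le2 P \<and> polyfun deriv_vars_le2 Q \<and>
        (\<forall>z\<in>X. Q (deriv_values D I z) \<noteq> 0 \<and>
                f z = P (deriv_values D I z) / Q (deriv_values D I z)))"

end

theory Submission
  imports Defs
begin

lemma polyfun_sum: "finite S \<Longrightarrow> (\<And>s. s \<in> S \<Longrightarrow> polyfun V (f s)) \<Longrightarrow> polyfun V (\<lambda>u. \<Sum>s\<in>S. f s u)"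
proof (induction S rule: finite_induct)
  case empty then show ?case using polyfun.const[of V 0] by simp
next
  case (insert x F) then show ?case using polyfun.add[of V "f x" "\<lambda>u. \<Sum>s\<in>F. f s u"] by simp
qed

lemma polyfun_prod: "finite S \<Longrightarrow> (\<And>s. s \<in> S \<Longrightarrow> polyfun V (f s)) \<Longrightarrow> polyfun V (\<lambda>u. \<Prod>s\<in>S. f s u)"
proof (induction S rule: finite_induct)
  case empty then show ?case using polyfun.const[of V 1] by simp
next
  case (insert x F) then show ?case using polyfun.mult[of V "f x" "\<lambda>u. \<Prod>s\<in>F. f s u"] by simp
qed

lemma polyfun_det:
  fixes M :: "('v \<Rightarrow> real) \<Rightarrow> real^'n::finite^'n"
  assumes "\<And>a b. polyfun V (\<lambda>u. M u $ a $ b)"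
  shows "polyfun V (\<lambda>u. det (M u))"
  unfolding det_def
  apply (rule polyfun_sum)
   apply simp
  apply (rule polyfun.mult)
   apply (rule polyfun.const)
  apply (rule polyfun_prod)
  using assms by auto

lemma polyfun_diff: "polyfun V P \<Longrightarrow> polyfun V Q \<Longrightarrow> polyfun V (\<lambda>u. P u - Q u)"
proof -
  assume a: "polyfun V P" "polyfun V Q"
  have "polyfun V (\<lambda>u. P u + (-1) * Q u)"
    by (intro polyfun.add polyfun.mult a polyfun.const)
  then show ?thesis by simp
qed

theorem theorem4p4:
  fixes X :: "'x set"
    and act :: "'g \<Rightarrow> 'x \<Rightarrow> 'x"
    and F :: "('x \<Rightarrow> real) set"
    and D :: "'p::finite \<Rightarrow> ('x \<Rightarrow> real) \<Rightarrow> ('x \<Rightarrow> real)"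
    and Y :: "'p \<Rightarrow> 'p \<Rightarrow> 'p \<Rightarrow> 'x \<Rightarrow> real"
    and I :: "'p \<Rightarrow> 'x \<Rightarrow> real"
  assumes D_closed: "\<And>i f. f \<in> F \<Longrightarrow> D i f \<in> F"
    and D_invariant: "\<And>i f. f \<in> F \<Longrightarrow> invariant_fun act X f \<Longrightarrow> invariant_fun act X (D i f)"
    and Y_invariant: "\<And>i j k. Y i j k \<in> F \<and> invariant_fun act X (Y i j k)"
    and Y_skew: "\<And>i j k. Y i j k = (\<lambda>z. - Y i k j z)"
    and commutation: "\<And>j k f z. f \<in> F \<Longrightarrow> z \<in> X \<Longrightarrow>
          D j (D k f) z - D k (D j f) z = (\<Sum>i\<in>UNIV. Y i j k z * D i f z)"
    and I_invariant: "\<And>l. I l \<in> F \<and> invariant_fun act X (I l)"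
    and nonsingular: "\<And>z. z \<in> X \<Longrightarrow> det (\<chi> i l. D i (I l) z :: real^'p^'p) \<noteq> 0"
  shows "\<forall>i j k. rational_in_derivs_le2 X D I (Y i j k)"
proof (intro allI)
  fix i j k :: 'p
  define N :: "('p list \<times> 'p \<Rightarrow> real) \<Rightarrow> real^'p^'p" where
    "N u = (\<chi> l a. u ([a], l))" for u
  define b :: "('p list \<times> 'p \<Rightarrow> real) \<Rightarrow> real^'p" where
    "b u = (\<chi> l. u ([j,k], l) - u ([k,j], l))" for u
  define P where "P u = det (\<chi> r s. if s = i then b u $ r else N u $ r $ s)" for u
  define Q where "Q u = det (N u)" for u
  have vars: "([a], l) \<in> deriv_vars_le2" "([j,k], l) \<in> deriv_vars_le2" "([k,j], l) \<in> deriv_vars_le2"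
    for a l :: 'p by (auto simp: deriv_vars_le2_def)
  have pQ: "polyfun deriv_vars_le2 Q"
    unfolding Q_def by (rule polyfun_det) (simp add: N_def polyfun.var vars)
  have pP: "polyfun deriv_vars_le2 P"
    unfolding P_def
  proof (rule polyfun_det)
    fix a s :: 'p
    show "polyfun deriv_vars_le2 (\<lambda>u. (\<chi> r s. if s = i then b u $ r else N u $ r $ s) $ a $ s)"
    proof (cases "s = i")
      case True then show ?thesis
        by (simp add: b_def polyfun.var vars polyfun_diff)
    next
      case False then show ?thesis by (simp add: N_def polyfun.var vars)
    qed
  qed
  have main: "Q (deriv_values D I z) \<noteq> 0 \<and> Y i j k z = P (deriv_values D I z) / Q (deriv_values D I z)"
    if z: "z \<in> X" for z
  proof -
    let ?u = "deriv_values D I z"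
    have NA: "N ?u = transpose (\<chi> i l. D i (I l) z :: real^'p^'p)"
      by (simp add: N_def deriv_values_def transpose_def)
    have Q0: "Q ?u \<noteq> 0" unfolding Q_def NA det_transpose using nonsingular[OF z] .
    define y :: "real^'p" where "y = (\<chi> a. Y a j k z)"
    have bu: "b ?u = N ?u *v y"
    proof -
      have "b ?u $ l = (N ?u *v y) $ l" for l
        using commutation[of "I l" z j k, OF conjunct1[OF I_invariant] z]
        by (simp add: b_def N_def y_def deriv_values_def matrix_vector_mult_def mult.commute)
      then show ?thesis by (simp add: vec_eq_iff)
    qed
    have "P ?u = y $ i * Q ?u"
      using cramer_lemma[of i "N ?u" y] by (simp only: P_def Q_def bu)
    then show ?thesis
      using Q0 by (simp add: y_def)
  qed
  show "rational_in_derivs_le2 X D I (Y i j k)"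
    unfolding rational_in_derivs_le2_def using pP pQ main by blast
qed

end
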